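(* Let $m\ge1$ be an integer and write $s_n=s_n^{(m+1,m+2)}$. Then for all $n\ge0$, \[ s_n^2=\delta_{n,0}+s_{n-m-1}^2+s_{n-m-2}^2+2\sum_{l=2m+3}^n P_{l-2m-3}^{\{-2,m-1,m\}}s_{n-l}^2 . \]
   Context: For positive integers $p<q$, $s_n^{(p,q)}$ is defined by $s_n^{(p,q)}=\delta_{0,n}+s_{n-p}^{(p,q)}+s_{n-q}^{(p,q)}$ for $n\ge0$ and $s_n^{(p,q)}=0$ for $n<0$. $\delta_{i,j}$ is $1$ if $i=j$ and $0$ otherwise. For a finite set $W$ of integers, $P_n^W$ is the number of permutations $\pi$ of $\{1,\dots,n\}$ with $\pi(i)-i\in W$ for all $i$ (the permanent of the $n\times n$ $(0,1)$ Toeplitz matrix whose $(i,j)$ entry is $1$ iff $j-i\in W$), with $P_0^W=1$. Empty sums are $0$. *)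

theory Defs
  imports Main "HOL-Combinatorics.Permutations"
begin

function sseq :: "nat \<Rightarrow> nat \<Rightarrow> int \<Rightarrow> nat" where
  "sseq p q n = (if n < 0 \<or> p = 0 \<or> q = 0 then 0
     else (if n = 0 then 1 else 0) + sseq p q (n - int p) + sseq p q (n - int q))"
  by pat_completeness auto
termination
  by (relation "measure (\<lambda>(p, q, n). nat (n + 1))") auto

definition Pperm :: "int set \<Rightarrow> nat \<Rightarrow> nat" where
  "Pperm W n = card {\<pi>. \<pi> permutes {1..n} \<and> (\<forall>i\<in>{1..n}. int (\<pi> i) - int i \<in> W)}"

end

theory Submission
  imports Defs
begin


lemma sseq_neg: "n < 0 \<Longrightarrow> sseq p q n = 0"
  by (subst sseq.simps) simp

lemma sseq_rec: "0 \<le> n \<Longrightarrow> 0 < p \<Longrightarrow> 0 < q \<Longrightarrow>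
  sseq p q n = (if n = 0 then 1 else 0) + sseq p q (n - int p) + sseq p q (n - int q)"
  by (subst sseq.simps) simp

declare sseq.simps[simp del]

function G :: "nat \<Rightarrow> nat \<Rightarrow> nat \<Rightarrow> nat \<Rightarrow> nat \<Rightarrow> nat" where
  "G p q x y T = (if y \<le> x \<or> T < x then 0 else
     (if x = T \<and> y = T + 1 then 1 else 0)
     + (if y < x + p then G p q y (x + p) T else 0)
     + (if y < x + q then G p q y (x + q) T else 0))"
  by pat_completeness auto
termination
  by (relation "measure (\<lambda>(p, q, x, y, T). T + 1 - x)") auto

declare G.simps[simp del]

lemma G_zero: "T < x \<Longrightarrow> G p q x y T = 0"
  by (subst G.simps) simp

lemma G_rec: assumes "x < y" shows "G p q x y T =
     (if x = T \<and> y = T + 1 then 1 else 0)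
     + (if y < x + p then G p q y (x + p) T else 0)
     + (if y < x + q then G p q y (x + q) T else 0)"
proof (cases "T < x")
  case True
  then have "T < y" "T < x + p" "T < x + q" using \<open>x < y\<close> by auto
  then show ?thesis using True by (simp add: G_zero)
next
  case False
  then show ?thesis using assms by (subst G.simps) simp
qed

lemma G_nz: "G p q x y T \<noteq> 0 \<Longrightarrow> y \<le> T + 1"
proof (induction p q x y T rule: G.induct)
  case (1 p q x y T)
  show ?case
  proof (rule ccontr)
    assume "\<not> y \<le> T + 1"
    then have "(if y < x + p then G p q y (x + p) T else 0) = 0"
       "(if y < x + q then G p q y (x + q) T else 0) = 0"
      using 1(1,2) by (auto simp: G_zero)
    then show False using 1(3) \<open>\<not> y \<le> T + 1\<close> by (subst (asm) G.simps) (auto split: if_splits)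
  qed
qed

lemma G_shift: "G p q (x + c) (y + c) (T + c) = G p q x y T"
proof (induction p q x y T rule: G.induct)
  case (1 p q x y T)
  have "G p q (x+c) (y+c) (T+c) = (if y \<le> x \<or> T < x then 0 else
     (if x = T \<and> y = T + 1 then 1 else 0)
     + (if y < x + p then G p q (y+c) (x + p + c) (T+c) else 0)
     + (if y < x + q then G p q (y+c) (x + q + c) (T+c) else 0))"
    by (subst G.simps) (simp add: algebra_simps)
  also have "\<dots> = G p q x y T"
    using 1 by (subst (2) G.simps) auto
  finally show ?case .
qed

lemma alg:
  assumes p: "0 < p"
  shows "x < y \<Longrightarrow> y \<le> x + p \<Longrightarrow>
    sseq p (p+1) (int N - int x) * sseq p (p+1) (int N - int y)
    = (if y = x + p then (sseq p (p+1) (int N - int y))^2 else 0)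
      + (\<Sum>T\<le>N. G p (p+1) x y T * (sseq p (p+1) (int N - int T - int (p+1)))^2)"
proof (induction "N + 1 - x" arbitrary: x y rule: less_induct)
  case less
  let ?S = "\<lambda>k. sseq p (p+1) k"
  show ?case
  proof (cases "N < y")
    case True
    have "?S (int N - int y) = 0" using True by (simp add: sseq_neg)
    moreover have "G p (p+1) x y T * (?S (int N - int T - int (p+1)))^2 = 0" for T
    proof (cases "G p (p+1) x y T = 0")
      case False
      then have "y \<le> T + 1" using G_nz by blast
      then have "int N - int T - int (p+1) < 0" using True p by linarith
      then show ?thesis by (simp add: sseq_neg)
    qed simp
    moreover have "(if y = x + p then (?S (int N - int y))^2 else 0) = 0"
      using \<open>?S (int N - int y) = 0\<close> by auto
    ultimately show ?thesis by simp
  next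
    case False
    have xN: "x < N" using False less.prems by linarith
    have rx: "?S (int N - int x) = ?S (int N - int (x+p)) + ?S (int N - int (x+p+1))"
      using sseq_rec[of "int N - int x" p "p+1"] xN p by (simp add: algebra_simps)
    define F where "F = (\<lambda>a b. \<Sum>T\<le>N. G p (p+1) a b T * (?S (int N - int T - int (p+1)))^2)"
    have A: "?S (int N - int (x+p)) * ?S (int N - int y) =
       (if y = x + p then (?S (int N - int y))^2 else F y (x+p))"
    proof (cases "y = x + p")
      case True then show ?thesis by (simp add: power2_eq_square)
    next
      case False
      then have "y < x + p" using less.prems by simp
      then have "?S (int N - int y) * ?S (int N - int (x+p)) = F y (x+p)"
        using less.hyps[of y "x+p"] less.prems False xN unfolding F_def by simp
      then show ?thesis using False by (simp add: mult.commute)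
    qed
    have B: "?S (int N - int (x+p+1)) * ?S (int N - int y) =
       (if y = x + 1 then (?S (int N - int (x+p+1)))^2 else 0) + F y (x+p+1)"
    proof -
      have "?S (int N - int y) * ?S (int N - int (x+p+1)) =
         (if x + p + 1 = y + p then (?S (int N - int (x+p+1)))^2 else 0) + F y (x+p+1)"
        using less.hyps[of y "x+p+1"] less.prems xN unfolding F_def by simp
      then show ?thesis by (simp add: mult.commute)
    qed
    have Gs: "F x y = (if y = x + 1 then (?S (int N - int (x+p+1)))^2 else 0)
        + (if y < x + p then F y (x+p) else 0) + F y (x+p+1)"
    proof -
      have "F x y = (\<Sum>T\<le>N. (if x = T \<and> y = T + 1 then 1 else 0) * (?S (int N - int T - int (p+1)))^2
          + (if y < x + p then G p (p+1) y (x + p) T * (?S (int N - int T - int (p+1)))^2 else 0)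
          + (if y < x + (p+1) then G p (p+1) y (x + (p+1)) T * (?S (int N - int T - int (p+1)))^2 else 0))"
        unfolding F_def
        by (rule sum.cong[OF refl], subst G_rec[OF less.prems(1)]) (simp add: algebra_simps)
      also have "\<dots> = (\<Sum>T\<le>N. (if x = T \<and> y = T + 1 then 1 else 0) * (?S (int N - int T - int (p+1)))^2)
          + (if y < x + p then F y (x+p) else 0) + F y (x+p+1)"
        using less.prems unfolding F_def by (simp add: sum.distrib)
      also have "(\<Sum>T\<le>N. (if x = T \<and> y = T + 1 then 1 else 0) * (?S (int N - int T - int (p+1)))^2)
          = (if y = x + 1 then (?S (int N - int (x+p+1)))^2 else 0)"
      proof (cases "y = x + 1")
        case True
        have "(\<Sum>T\<le>N. (if x = T \<and> y = T + 1 then 1 else 0) * (?S (int N - int T - int (p+1)))^2)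
           = (\<Sum>T\<le>N. if T = x then (?S (int N - int x - int (p+1)))^2 else 0)"
          using True by (intro sum.cong) auto
        also have "\<dots> = (?S (int N - int x - int (p+1)))^2" using xN by simp
        finally show ?thesis using True by (simp add: algebra_simps)
      qed auto
      finally show ?thesis .
    qed
    have "?S (int N - int x) * ?S (int N - int y) =
      ?S (int N - int (x+p)) * ?S (int N - int y) + ?S (int N - int (x+p+1)) * ?S (int N - int y)"
      by (simp only: rx distrib_right)
    also have "\<dots> = (if y = x + p then (?S (int N - int y))^2 else 0) + F x y"
      unfolding A B Gs using less.prems by auto
    finally show ?thesis unfolding F_def .
  qed
qed



definition okI :: "nat \<Rightarrow> nat \<Rightarrow> nat \<Rightarrow> nat list \<Rightarrow> bool" where
  "okI p q T l \<longleftrightarrow> sorted_wrt (<) l \<and> 2 \<le> length l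
     \<and> (\<forall>k. k + 2 < length l \<longrightarrow> l!(k+2) = l!k + p \<or> l!(k+2) = l!k + q)
     \<and> l!(length l - 2) = T \<and> l!(length l - 1) = T + 1"

lemma okI_two: "okI p q T [x, y] \<longleftrightarrow> x = T \<and> y = T + 1"
  unfolding okI_def by auto

lemma okI_cons: "okI p q T (x # y # z # r) \<longleftrightarrow>
   x < y \<and> (z = x + p \<or> z = x + q) \<and> okI p q T (y # z # r)"
proof -
  have s: "sorted_wrt (<) (x # y # z # r) \<longleftrightarrow> x < y \<and> sorted_wrt (<) (y # z # r)"
    by auto
  have a: "(\<forall>k. k + 2 < length (x # y # z # r) \<longrightarrow>
        (x # y # z # r)!(k+2) = (x # y # z # r)!k + p \<or> (x # y # z # r)!(k+2) = (x # y # z # r)!k + q)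
     \<longleftrightarrow> (z = x + p \<or> z = x + q) \<and> (\<forall>k. k + 2 < length (y # z # r) \<longrightarrow>
        (y # z # r)!(k+2) = (y # z # r)!k + p \<or> (y # z # r)!(k+2) = (y # z # r)!k + q)"
  proof
    assume H: "\<forall>k. k + 2 < length (x # y # z # r) \<longrightarrow>
        (x # y # z # r)!(k+2) = (x # y # z # r)!k + p \<or> (x # y # z # r)!(k+2) = (x # y # z # r)!k + q"
    show "(z = x + p \<or> z = x + q) \<and> (\<forall>k. k + 2 < length (y # z # r) \<longrightarrow>
        (y # z # r)!(k+2) = (y # z # r)!k + p \<or> (y # z # r)!(k+2) = (y # z # r)!k + q)"
    proof
      show "z = x + p \<or> z = x + q" using H[rule_format, of 0] by simp
      show "\<forall>k. k + 2 < length (y # z # r) \<longrightarrow>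
        (y # z # r)!(k+2) = (y # z # r)!k + p \<or> (y # z # r)!(k+2) = (y # z # r)!k + q"
      proof (intro allI impI)
        fix k assume "k + 2 < length (y # z # r)"
        then show "(y # z # r)!(k+2) = (y # z # r)!k + p \<or> (y # z # r)!(k+2) = (y # z # r)!k + q"
          using H[rule_format, of "Suc k"] by simp
      qed
    qed
  next
    assume H: "(z = x + p \<or> z = x + q) \<and> (\<forall>k. k + 2 < length (y # z # r) \<longrightarrow>
        (y # z # r)!(k+2) = (y # z # r)!k + p \<or> (y # z # r)!(k+2) = (y # z # r)!k + q)"
    show "\<forall>k. k + 2 < length (x # y # z # r) \<longrightarrow>
        (x # y # z # r)!(k+2) = (x # y # z # r)!k + p \<or> (x # y # z # r)!(k+2) = (x # y # z # r)!k + q"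
    proof (intro allI impI)
      fix k assume k: "k + 2 < length (x # y # z # r)"
      show "(x # y # z # r)!(k+2) = (x # y # z # r)!k + p \<or> (x # y # z # r)!(k+2) = (x # y # z # r)!k + q"
      proof (cases k)
        case 0 then show ?thesis using H by simp
      next
        case (Suc j) then show ?thesis using H k by auto
      qed
    qed
  qed
  have l: "(x # y # z # r)!(length (x # y # z # r) - 2) = (y # z # r)!(length (y # z # r) - 2)"
          "(x # y # z # r)!(length (x # y # z # r) - 1) = (y # z # r)!(length (y # z # r) - 1)"
    by (simp_all add: nth_Cons')
  show ?thesis unfolding okI_def s a l by auto
qed

lemma okI_le: "okI p q T (x # r) \<Longrightarrow> x \<le> T"
proof -
  assume H: "okI p q T (x # r)"
  then have "sorted (x # r)" "length (x # r) \<ge> 2" and e: "(x # r)!(length (x # r) - 2) = T"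
    unfolding okI_def by (auto simp: strict_sorted_iff)
  then have "(x # r)!0 \<le> (x # r)!(length (x # r) - 2)"
    by (intro sorted_nth_mono) auto
  then show ?thesis using e by simp
qed

definition C :: "nat \<Rightarrow> nat \<Rightarrow> nat \<Rightarrow> nat \<Rightarrow> nat \<Rightarrow> nat list set" where
  "C p q T x y = {r. okI p q T (x # y # r)}"

lemma C_eq: "C p q T x y =
   (if x = T \<and> y = T + 1 then {[]} else {})
   \<union> (if x < y \<and> y < x + p then Cons (x + p) ` C p q T y (x + p) else {})
   \<union> (if x < y \<and> y < x + q then Cons (x + q) ` C p q T y (x + q) else {})"
proof (intro set_eqI iffI)
  fix r assume "r \<in> C p q T x y"
  then have H: "okI p q T (x # y # r)" by (simp add: C_def)
  show "r \<in> (if x = T \<and> y = T + 1 then {[]} else {})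
   \<union> (if x < y \<and> y < x + p then Cons (x + p) ` C p q T y (x + p) else {})
   \<union> (if x < y \<and> y < x + q then Cons (x + q) ` C p q T y (x + q) else {})"
  proof (cases r)
    case Nil then show ?thesis using H by (simp add: okI_two)
  next
    case (Cons z r')
    then have H': "x < y" "z = x + p \<or> z = x + q" "okI p q T (y # z # r')"
      using H okI_cons by auto
    then have "y < z" unfolding okI_def by (simp add: sorted_wrt2)
    then show ?thesis using H' Cons by (auto simp: C_def)
  qed
next
  fix r assume "r \<in> (if x = T \<and> y = T + 1 then {[]} else {})
   \<union> (if x < y \<and> y < x + p then Cons (x + p) ` C p q T y (x + p) else {})
   \<union> (if x < y \<and> y < x + q then Cons (x + q) ` C p q T y (x + q) else {})"
  then show "r \<in> C p q T x y"
    by (auto simp: C_def okI_two okI_cons split: if_splits)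
qed

lemma C_card: "p < q \<Longrightarrow> finite (C p q T x y) \<and> card (C p q T x y) = G p q x y T"
proof (induction p q x y T rule: G.induct)
  case (1 p q x y T)
  show ?case
  proof (cases "y \<le> x \<or> T < x")
    case True
    have "C p q T x y = {}"
    proof -
      { fix r assume "okI p q T (x # y # r)"
        then have "x < y" "x \<le> T" using okI_le[of p q T x "y # r"] unfolding okI_def by auto
        then have False using True by auto }
      then show ?thesis by (auto simp: C_def)
    qed
    then show ?thesis using True by (subst G.simps) simp
  next
    case False
    define A0 where "A0 = (if x = T \<and> y = T + 1 then {[]} else ({} :: nat list set))"
    define A1 where "A1 = (if x < y \<and> y < x + p then Cons (x + p) ` C p q T y (x + p) else {})"
    define A2 where "A2 = (if x < y \<and> y < x + q then Cons (x + q) ` C p q T y (x + q) else {})"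
    have eq: "C p q T x y = A0 \<union> A1 \<union> A2" unfolding A0_def A1_def A2_def by (rule C_eq)
    have f1: "finite A1 \<and> card A1 = (if y < x + p then G p q y (x + p) T else 0)"
      using 1(1)[OF False] 1(3) False unfolding A1_def by (auto simp: card_image)
    have f2: "finite A2 \<and> card A2 = (if y < x + q then G p q y (x + q) T else 0)"
      using 1(2)[OF False] 1(3) False unfolding A2_def by (auto simp: card_image)
    have f0: "finite A0 \<and> card A0 = (if x = T \<and> y = T + 1 then 1 else 0)"
      unfolding A0_def by auto
    have d01: "A0 \<inter> A1 = {}" "A0 \<inter> A2 = {}" unfolding A0_def A1_def A2_def by auto
    have d12: "A1 \<inter> A2 = {}" using 1(3) unfolding A1_def A2_def by auto
    have "card (A0 \<union> A1 \<union> A2) = card A0 + card A1 + card A2"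
      using f0 f1 f2 d01 d12 by (simp add: card_Un_disjoint Int_Un_distrib2)
    then show ?thesis using eq f0 f1 f2 False by (subst G.simps) simp
  qed
qed



fun mk :: "nat list \<Rightarrow> nat \<Rightarrow> nat" where
  "mk (x # y # z # r) = (mk (y # z # r))(x := z - 2)"
| "mk _ = (\<lambda>i. i - 2)"

lemma mk_nth: "distinct l \<Longrightarrow> k + 2 < length l \<Longrightarrow> mk l (l!k) = l!(k+2) - 2"
proof (induction l arbitrary: k rule: mk.induct)
  case (1 x y z r)
  show ?case
  proof (cases k)
    case 0 then show ?thesis by simp
  next
    case (Suc j)
    have d: "distinct (y # z # r)" using 1(2) by simp
    have jl: "j + 2 < length (y # z # r)" using 1(3) Suc by simp
    have "(y # z # r)!j \<in> set (y # z # r)" using jl by (intro nth_mem) simp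
    then have ne: "(y # z # r)!j \<noteq> x" using 1(2) by auto
    have "mk (x # y # z # r) ((x # y # z # r)!k) = mk (y # z # r) ((y # z # r)!j)"
      using ne Suc by simp
    also have "\<dots> = (y # z # r)!(j+2) - 2" using 1(1)[OF d jl] .
    finally show ?thesis using Suc by simp
  qed
next
  case ("2_1") then show ?case by simp
next
  case ("2_2" v) then show ?case by simp
next
  case ("2_3" v w) then show ?case by simp
qed

lemma mk_notin: "i \<notin> set l \<Longrightarrow> mk l i = i - 2"
  by (induction l rule: mk.induct) auto

lemma sorted_nth_less_iff: "sorted_wrt (<) (l::nat list) \<Longrightarrow> i < length l \<Longrightarrow> j < length l \<Longrightarrow>
  (l!i < l!j) = (i < j)"
proof
  assume H: "sorted_wrt (<) l" "i < length l" "j < length l"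
  show "l!i < l!j \<Longrightarrow> i < j"
  proof (rule ccontr)
    assume a: "l!i < l!j" "\<not> i < j"
    show False
    proof (cases "i = j")
      case True then show False using a by simp
    next
      case False
      then have "j < i" using a by simp
      then have "l!j < l!i" using sorted_wrt_nth_less[OF H(1) _ H(2)] by blast
      then show False using a by simp
    qed
  qed
  show "i < j \<Longrightarrow> l!i < l!j" using sorted_wrt_nth_less[OF H(1) _ H(3)] by blast
qed

lemma rank_nth: assumes "sorted_wrt (<) (l::nat list)" "k < length l"
  shows "card {v \<in> set l. v < l!k} = k"
proof -
  have "{v \<in> set l. v < l!k} = (\<lambda>i. l!i) ` {..<k}"
  proof (intro set_eqI iffI)
    fix v assume "v \<in> {v \<in> set l. v < l!k}"
    then obtain j where "j < length l" "v = l!j" "l!j < l!k" by (auto simp: in_set_conv_nth)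
    then show "v \<in> (\<lambda>i. l!i) ` {..<k}" using sorted_nth_less_iff[OF assms(1)] assms(2) by auto
  next
    fix v assume "v \<in> (\<lambda>i. l!i) ` {..<k}"
    then show "v \<in> {v \<in> set l. v < l!k}" using sorted_nth_less_iff[OF assms(1)] assms(2) by auto
  qed
  moreover have "distinct l" using assms(1) strict_sorted_iff by blast
  then have "inj_on (\<lambda>i. l!i) {..<k}"
    using assms by (auto simp: inj_on_def nth_eq_iff_index_eq)
  ultimately show ?thesis by (simp add: card_image)
qed

lemma nth_rank: assumes "sorted_wrt (<) (l::nat list)" "v \<in> set l"
  shows "card {w \<in> set l. w < v} < length l \<and> l!(card {w \<in> set l. w < v}) = v"
proof -
  obtain j where "j < length l" "v = l!j" using assms(2) by (auto simp: in_set_conv_nth)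
  then show ?thesis using rank_nth[OF assms(1)] by auto
qed



definition PS :: "nat \<Rightarrow> nat \<Rightarrow> (nat \<Rightarrow> nat) set" where
  "PS m n = {\<pi>. \<pi> permutes {1..n} \<and> (\<forall>i\<in>{1..n}. int (\<pi> i) - int i \<in> {-2, int m - 1, int m})}"

definition Phi :: "nat \<Rightarrow> nat list \<Rightarrow> nat \<Rightarrow> nat" where
  "Phi n l = (\<lambda>i. if i \<in> {1..n} then mk l i else i)"

context
  fixes m n :: nat and L :: "nat list"
  assumes m1: "1 \<le> m" and ok: "okI (m+1) (m+2) (n+1) L" and L0: "L!0 = 1" and L1: "L!1 = 2"
begin

lemma L_sorted: "sorted_wrt (<) L" and L_len: "2 \<le> length L"
  and L_step: "\<And>k. k + 2 < length L \<Longrightarrow> L!(k+2) = L!k + (m+1) \<or> L!(k+2) = L!k + (m+2)"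
  and L_last2: "L!(length L - 2) = n + 1" and L_last1: "L!(length L - 1) = n + 2"
  using ok unfolding okI_def by auto

lemma L_distinct: "distinct L" using L_sorted strict_sorted_iff by blast

lemma L_bounds: "j < length L \<Longrightarrow> 1 \<le> L!j \<and> L!j \<le> n + 2"
proof -
  assume j: "j < length L"
  have s: "sorted L" using L_sorted strict_sorted_iff by blast
  have "L!0 \<le> L!j" using j by (intro sorted_nth_mono[OF s]) auto
  moreover have "L!j \<le> L!(length L - 1)" using j by (intro sorted_nth_mono[OF s]) auto
  ultimately show ?thesis using L_last1 L0 by simp
qed

lemma L_set: "set L \<subseteq> {1..n+2}"
proof
  fix x assume "x \<in> set L"
  then obtain j where "j < length L" "L!j = x" by (metis in_set_conv_nth)
  then show "x \<in> {1..n+2}" using L_bounds by auto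
qed

lemma L_mem12: "1 \<in> set L" "2 \<in> set L"
proof -
  have "0 < length L" "1 < length L" using L_len by auto
  then show "1 \<in> set L" "2 \<in> set L" using L0 L1 nth_mem[of 0 L] nth_mem[of 1 L] by metis+
qed

lemma L_mem: "n + 1 \<in> set L" "n + 2 \<in> set L"
proof -
  show "n + 1 \<in> set L" using L_last2 L_len nth_mem[of "length L - 2" L] by simp
  show "n + 2 \<in> set L" using L_last1 L_len nth_mem[of "length L - 1" L] by simp
qed

lemma L_idx: assumes "i \<in> set L" "i \<le> n" shows "\<exists>k. k + 2 < length L \<and> L!k = i"
proof -
  obtain k where k: "k < length L" "L!k = i" using assms(1) by (metis in_set_conv_nth)
  have "k + 2 < length L"
  proof (rule ccontr)
    assume "\<not> k + 2 < length L"
    then have "length L - 2 \<le> k" by simp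
    then have "L!(length L - 2) \<le> L!k"
      using k(1) L_sorted strict_sorted_iff sorted_nth_mono by blast
    then show False using L_last2 k assms(2) by simp
  qed
  then show ?thesis using k by blast
qed

lemma Phi_in: assumes "i \<in> {1..n}" "i \<in> set L"
  shows "Phi n L i + 2 \<in> set L \<and> (Phi n L i + 2 = i + (m+1) \<or> Phi n L i + 2 = i + (m+2))
     \<and> (\<exists>k. k + 2 < length L \<and> L!k = i \<and> L!(k+2) = Phi n L i + 2)"
proof -
  obtain k where k: "k + 2 < length L" "L!k = i" using L_idx assms by auto
  have e: "mk L i = L!(k+2) - 2" using mk_nth[OF L_distinct k(1)] k(2) by simp
  have st: "L!(k+2) = i + (m+1) \<or> L!(k+2) = i + (m+2)" using L_step[OF k(1)] k(2) by simp
  then have "Phi n L i + 2 = L!(k+2)" using e assms(1) unfolding Phi_def by auto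
  then show ?thesis using st k nth_mem[of "k+2" L] by auto
qed

lemma Phi_out: assumes "i \<in> {1..n}" "i \<notin> set L"
  shows "Phi n L i + 2 = i \<and> 3 \<le> i"
proof -
  have "i \<noteq> 1" "i \<noteq> 2" using assms(2) L_mem12 by auto
  then have "3 \<le> i" using assms(1) by auto
  then show ?thesis using mk_notin[OF assms(2)] assms(1) unfolding Phi_def by simp
qed

lemma Phi_PS: "Phi n L \<in> PS m n"
proof -
  let ?f = "Phi n L"
  have inj: "inj_on ?f {1..n}"
  proof (rule inj_onI)
    fix i j assume i: "i \<in> {1..n}" and j: "j \<in> {1..n}" and e: "?f i = ?f j"
    show "i = j"
    proof (cases "i \<in> set L")
      case True note iT = True
      show ?thesis
      proof (cases "j \<in> set L")
        case True
        obtain k where k: "k + 2 < length L" "L!k = i" "L!(k+2) = ?f i + 2" using Phi_in[OF i iT] by blast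
        obtain k' where k': "k' + 2 < length L" "L!k' = j" "L!(k'+2) = ?f j + 2" using Phi_in[OF j True] by blast
        have "L!(k+2) = L!(k'+2)" using k k' e by simp
        then have "k + 2 = k' + 2" using k(1) k'(1) L_distinct nth_eq_iff_index_eq by blast
        then show ?thesis using k k' by simp
      next
        case False
        then show ?thesis using Phi_in[OF i iT] Phi_out[OF j False] e False by auto
      qed
    next
      case False note iF = False
      show ?thesis
      proof (cases "j \<in> set L")
        case True
        then show ?thesis using Phi_in[OF j True] Phi_out[OF i iF] e iF by auto
      next
        case False
        then show ?thesis using Phi_out[OF j False] Phi_out[OF i iF] e by simp
      qed
    qed
  qed
  have img: "?f ` {1..n} \<subseteq> {1..n}"
  proof
    fix y assume "y \<in> ?f ` {1..n}"
    then obtain i where i: "i \<in> {1..n}" "y = ?f i" by blast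
    show "y \<in> {1..n}"
    proof (cases "i \<in> set L")
      case True
      then have "?f i + 2 \<in> set L" "?f i + 2 \<ge> i + (m+1)" using Phi_in[OF i(1) True] by auto
      then show ?thesis using L_set i m1 by auto
    next
      case False
      then show ?thesis using Phi_out[OF i(1) False] i by auto
    qed
  qed
  have "?f ` {1..n} = {1..n}" using endo_inj_surj[OF _ img inj] by simp
  then have "bij_betw ?f {1..n} {1..n}" using inj by (simp add: bij_betw_def)
  then have perm: "?f permutes {1..n}"
    by (rule bij_imp_permutes) (auto simp add: Phi_def)
  have disp: "\<forall>i\<in>{1..n}. int (?f i) - int i \<in> {-2, int m - 1, int m}"
  proof
    fix i assume i: "i \<in> {1..n}"
    show "int (?f i) - int i \<in> {-2, int m - 1, int m}"
    proof (cases "i \<in> set L")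
      case True
      then have "?f i + 2 = i + (m+1) \<or> ?f i + 2 = i + (m+2)" using Phi_in[OF i True] by blast
      then show ?thesis by auto
    next
      case False
      then show ?thesis using Phi_out[OF i False] by auto
    qed
  qed
  show ?thesis using perm disp unfolding PS_def by blast
qed

lemma Phi_set: "set L = {i \<in> {1..n}. Phi n L i + 2 \<noteq> i} \<union> {n+1, n+2}"
proof (intro set_eqI iffI)
  fix i assume iL: "i \<in> set L"
  show "i \<in> {i \<in> {1..n}. Phi n L i + 2 \<noteq> i} \<union> {n+1, n+2}"
  proof (cases "i \<le> n")
    case True
    then have i: "i \<in> {1..n}" using iL L_set by auto
    then show ?thesis using Phi_in[OF i iL] by auto
  next
    case False
    then show ?thesis using iL L_set by auto
  qed
next
  fix i assume "i \<in> {i \<in> {1..n}. Phi n L i + 2 \<noteq> i} \<union> {n+1, n+2}"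
  then show "i \<in> set L" using Phi_out L_mem by auto
qed

end



context
  fixes m n :: nat and \<pi> :: "nat \<Rightarrow> nat"
  assumes m1: "1 \<le> m" and pPS: "\<pi> \<in> PS m n"
begin

lemma pperm: "\<pi> permutes {1..n}"
  and pdisp: "\<forall>i\<in>{1..n}. int (\<pi> i) - int i \<in> {-2, int m - 1, int m}"
  using pPS unfolding PS_def by auto

lemma pinj: "\<pi> i = \<pi> j \<Longrightarrow> i = j"
  using permutes_inj[OF pperm] by (simp add: inj_eq)

lemma prange: "i \<in> {1..n} \<Longrightarrow> \<pi> i \<in> {1..n}"
  using permutes_in_image[OF pperm] by simp

lemma pd: assumes "i \<in> {1..n}" shows "\<pi> i + 2 = i \<or> \<pi> i + 2 = i + (m+1) \<or> \<pi> i + 2 = i + (m+2)"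
proof -
  have "int (\<pi> i) - int i = -2 \<or> int (\<pi> i) - int i = int m - 1 \<or> int (\<pi> i) - int i = int m"
    using pdisp assms by auto
  then show ?thesis by arith
qed

definition Uset where "Uset = {i \<in> {1..n}. \<pi> i + 2 \<noteq> i}"
definition Vset where "Vset = Uset \<union> {n+1, n+2}"

lemma V_fin: "finite Vset" unfolding Vset_def Uset_def by auto
lemma V_sub: "Vset \<subseteq> {1..n+2}" unfolding Vset_def Uset_def by auto
lemma V12: "1 \<in> Vset" "2 \<in> Vset"
proof -
  show "1 \<in> Vset"
  proof (cases "1 \<le> n")
    case True
    then have "\<pi> 1 \<in> {1..n}" using prange by auto
    then show ?thesis using True unfolding Vset_def Uset_def by auto
  next
    case False then show ?thesis unfolding Vset_def by auto
  qed
  show "2 \<in> Vset"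
  proof (cases "2 \<le> n")
    case True
    then have "\<pi> 2 \<in> {1..n}" using prange by auto
    then show ?thesis using True unfolding Vset_def Uset_def by auto
  next
    case False then have "n = 0 \<or> n = 1" by auto
    then show ?thesis unfolding Vset_def by auto
  qed
qed

lemma U_disp: "u \<in> Uset \<Longrightarrow> \<pi> u + 2 = u + (m+1) \<or> \<pi> u + 2 = u + (m+2)"
  using pd unfolding Uset_def by auto

lemma U_mono: assumes "u \<in> Uset" "v \<in> Uset" "u < v" shows "\<pi> u < \<pi> v"
proof -
  have "\<pi> u \<le> \<pi> v" using U_disp[OF assms(1)] U_disp[OF assms(2)] assms(3) by auto
  moreover have "\<pi> u \<noteq> \<pi> v" using pinj assms(3) by auto
  ultimately show ?thesis by simp
qed

lemma fU: assumes "u \<in> Uset" shows "\<pi> u + 2 \<in> Vset"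
proof (cases "\<pi> u + 2 \<le> n")
  case True
  have "\<pi> u + 2 \<in> Uset"
  proof (rule ccontr)
    assume "\<pi> u + 2 \<notin> Uset"
    then have "\<pi> (\<pi> u + 2) = \<pi> u" using True unfolding Uset_def by auto
    then have "\<pi> u + 2 = u" using pinj by blast
    then show False using U_disp[OF assms] by auto
  qed
  then show ?thesis unfolding Vset_def by auto
next
  case False
  have "\<pi> u \<le> n" using prange assms unfolding Uset_def by auto
  then show ?thesis using False unfolding Vset_def by auto
qed

definition rk where "rk v = card {w \<in> Vset. w < v}"

lemma rk_U: assumes "u \<in> Uset" shows "rk (\<pi> u + 2) = rk u + 2"
proof -
  define B where "B = {v \<in> Uset. v < u}"
  have un: "u \<le> n" using assms unfolding Uset_def by auto
  have A: "{w \<in> Vset. w < \<pi> u + 2} = {1, 2} \<union> (\<lambda>v. \<pi> v + 2) ` B"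
  proof (intro set_eqI iffI)
    fix w assume w: "w \<in> {w \<in> Vset. w < \<pi> u + 2}"
    show "w \<in> {1, 2} \<union> (\<lambda>v. \<pi> v + 2) ` B"
    proof (cases "w \<in> {1, 2}")
      case True then show ?thesis by blast
    next
      case False
      then have w3: "3 \<le> w" "w \<le> n + 2" using w V_sub by auto
      obtain j where j: "\<pi> j = w - 2" using permutes_surj[OF pperm] by (metis surjD)
      have jn: "j \<in> {1..n}"
        using j w3 permutes_in_image[OF pperm, of j] by auto
      have jU: "j \<in> Uset"
      proof (rule ccontr)
        assume "j \<notin> Uset"
        then have "\<pi> j + 2 = j" using jn unfolding Uset_def by auto
        then have "j = w" using j w3 by simp
        then have "w \<in> Uset" using w jn unfolding Vset_def by auto
        then show False using \<open>j = w\<close> \<open>j \<notin> Uset\<close> by simp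
      qed
      have "j < u"
      proof (rule ccontr)
        assume "\<not> j < u"
        then have "j = u \<or> u < j" by auto
        then have "\<pi> u \<le> \<pi> j" using U_mono[OF assms jU] by auto
        then show False using j w w3 by auto
      qed
      then have "j \<in> B" using jU unfolding B_def by auto
      moreover have "w = \<pi> j + 2" using j w3 by simp
      ultimately show ?thesis by blast
    qed
  next
    fix w assume "w \<in> {1, 2} \<union> (\<lambda>v. \<pi> v + 2) ` B"
    moreover have "1 \<le> \<pi> u" using prange assms unfolding Uset_def by fastforce
    moreover have "\<And>v. v \<in> B \<Longrightarrow> \<pi> v + 2 \<in> Vset \<and> \<pi> v < \<pi> u"
      using fU U_mono assms unfolding B_def by auto
    ultimately show "w \<in> {w \<in> Vset. w < \<pi> u + 2}" using V12 by auto
  qed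
  have fB: "finite B" unfolding B_def Uset_def by auto
  have injB: "inj_on (\<lambda>v. \<pi> v + 2) B" using pinj by (auto simp: inj_on_def)
  have "\<And>v. v \<in> B \<Longrightarrow> 1 \<le> \<pi> v" using prange unfolding B_def Uset_def by fastforce
  then have dis: "{1, 2} \<inter> (\<lambda>v. \<pi> v + 2) ` B = {}" by fastforce
  have "card {w \<in> Vset. w < \<pi> u + 2} = 2 + card B"
    unfolding A using card_Un_disjoint[OF _ _ dis] fB card_image[OF injB] by simp
  moreover have "{w \<in> Vset. w < u} = B" using un unfolding B_def Vset_def by auto
  ultimately show ?thesis unfolding rk_def by simp
qed

definition lst where "lst = sorted_list_of_set Vset"

lemma l_sorted: "sorted_wrt (<) lst" unfolding lst_def by simp
lemma l_set: "set lst = Vset" unfolding lst_def using V_fin by simp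
lemma l_len: "length lst = card Vset" unfolding lst_def by simp

lemma l_rk: "v \<in> Vset \<Longrightarrow> rk v < length lst \<and> lst!(rk v) = v"
  using nth_rank[OF l_sorted, of v] l_set unfolding rk_def by simp

lemma rk_of_nth: "k < length lst \<Longrightarrow> rk (lst!k) = k"
  using rank_nth[OF l_sorted] l_set unfolding rk_def by simp

lemma rk1: "rk 1 = 0"
proof -
  have "{w \<in> Vset. w < 1} = {}" using V_sub by auto
  then show ?thesis unfolding rk_def by simp
qed

lemma rk2: "rk 2 = 1"
proof -
  have "{w \<in> Vset. w < 2} = {1}" using V_sub V12 by auto
  then show ?thesis unfolding rk_def by simp
qed

lemma rkn1: "rk (n+1) = card Vset - 2"
proof -
  have "{w \<in> Vset. w < n + 1} = Vset - {n+1, n+2}" using V_sub by auto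
  moreover have "{n+1, n+2} \<subseteq> Vset" unfolding Vset_def by auto
  ultimately show ?thesis unfolding rk_def using V_fin by (simp add: card_Diff_subset)
qed

lemma rkn2: "rk (n+2) = card Vset - 1"
proof -
  have "{w \<in> Vset. w < n + 2} = Vset - {n+2}" using V_sub by auto
  moreover have "n+2 \<in> Vset" unfolding Vset_def by auto
  ultimately show ?thesis unfolding rk_def using V_fin by simp
qed

lemma l0: "lst!0 = 1" and l1: "lst!1 = 2" and llen: "2 \<le> length lst"
  and llast2: "lst!(length lst - 2) = n+1" and llast1: "lst!(length lst - 1) = n+2"
proof -
  show "lst!0 = 1" using l_rk[OF V12(1)] rk1 by simp
  show "lst!1 = 2" using l_rk[OF V12(2)] rk2 by simp
  show "2 \<le> length lst" using l_rk[OF V12(2)] rk2 by simp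
  have "n+1 \<in> Vset" "n+2 \<in> Vset" unfolding Vset_def by auto
  then show "lst!(length lst - 2) = n+1" "lst!(length lst - 1) = n+2"
    using l_rk[of "n+1"] l_rk[of "n+2"] rkn1 rkn2 l_len by auto
qed

lemma l_step: assumes k: "k + 2 < length lst"
  shows "lst!k \<in> Uset \<and> lst!(k+2) = \<pi> (lst!k) + 2"
proof -
  have a: "lst!k < lst!(k+1)" "lst!(k+1) < lst!(k+2)"
    using sorted_wrt_nth_less[OF l_sorted] k by auto
  have "lst!(k+2) \<in> Vset" using k l_set nth_mem[of "k+2" lst] by simp
  then have "lst!(k+2) \<le> n + 2" using V_sub by auto
  then have kn: "lst!k \<le> n" using a by simp
  have "lst!k \<in> Vset" using k l_set nth_mem[of k lst] by simp
  then have u: "lst!k \<in> Uset" using kn unfolding Vset_def by auto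
  have "rk (\<pi> (lst!k) + 2) = k + 2" using rk_U[OF u] rk_of_nth k by simp
  then have "lst!(k+2) = \<pi> (lst!k) + 2" using l_rk[OF fU[OF u]] by simp
  then show ?thesis using u by simp
qed

lemma l_ok: "okI (m+1) (m+2) (n+1) lst"
  unfolding okI_def
proof (intro conjI allI impI)
  show "sorted_wrt (<) lst" by (rule l_sorted)
  show "2 \<le> length lst" by (rule llen)
  show "lst!(length lst - 2) = n+1" by (rule llast2)
  show "lst!(length lst - 1) = n+1+1" using llast1 by simp
  fix k assume "k + 2 < length lst"
  then show "lst!(k+2) = lst!k + (m+1) \<or> lst!(k+2) = lst!k + (m+2)"
    using l_step U_disp by metis
qed

lemma l_Phi: "Phi n lst = \<pi>"
proof
  fix i
  show "Phi n lst i = \<pi> i"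
  proof (cases "i \<in> {1..n}")
    case False
    then show ?thesis using permutes_not_in[OF pperm False] unfolding Phi_def by auto
  next
    case True
    show ?thesis
    proof (cases "i \<in> Vset")
      case iV: True
      have k: "rk i < length lst" "lst!(rk i) = i" using l_rk[OF iV] by auto
      have "rk i + 2 < length lst"
      proof (rule ccontr)
        assume "\<not> rk i + 2 < length lst"
        then have "length lst - 2 \<le> rk i" by simp
        then have "lst!(length lst - 2) \<le> lst!(rk i)"
          using k(1) l_sorted strict_sorted_iff sorted_nth_mono by blast
        then show False using llast2 k True by simp
      qed
      then have "mk lst i = \<pi> i"
        using mk_nth[of lst "rk i"] l_sorted strict_sorted_iff l_step k by auto
      then show ?thesis using True unfolding Phi_def by simp
    next
      case iV: False
      then have "\<pi> i + 2 = i" "i \<notin> set lst" using True l_set unfolding Vset_def Uset_def by auto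
      then show ?thesis using mk_notin True unfolding Phi_def by auto
    qed
  qed
qed

end



lemma Pperm_G:
  assumes m1: "1 \<le> m"
  shows "Pperm {-2, int m - 1, int m} n = G (m+1) (m+2) 1 2 (n+1)"
proof -
  have P: "Pperm {-2, int m - 1, int m} n = card (PS m n)" unfolding Pperm_def PS_def by simp
  let ?C = "C (m+1) (m+2) (n+1) 1 2"
  have CG: "card ?C = G (m+1) (m+2) 1 2 (n+1)" using C_card[of "m+1" "m+2"] by simp
  have bij: "bij_betw (\<lambda>r. Phi n (1 # 2 # r)) ?C (PS m n)"
  proof (rule bij_betw_imageI)
    show "inj_on (\<lambda>r. Phi n (1 # 2 # r)) ?C"
    proof (rule inj_onI)
      fix r1 r2 assume r1: "r1 \<in> ?C" and r2: "r2 \<in> ?C" and e: "Phi n (1 # 2 # r1) = Phi n (1 # 2 # r2)"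
      have o1: "okI (m+1) (m+2) (n+1) (1 # 2 # r1)" using r1 unfolding C_def by simp
      have o2: "okI (m+1) (m+2) (n+1) (1 # 2 # r2)" using r2 unfolding C_def by simp
      have "set (1 # 2 # r1) = set (1 # 2 # r2)"
        using Phi_set[OF m1 o1] Phi_set[OF m1 o2] e by simp
      moreover have "sorted (1 # 2 # r1)" "distinct (1 # 2 # r1)"
        "sorted (1 # 2 # r2)" "distinct (1 # 2 # r2)"
        using o1 o2 unfolding okI_def strict_sorted_iff by auto
      ultimately have "1 # 2 # r1 = 1 # 2 # r2" using sorted_distinct_set_unique by blast
      then show "r1 = r2" by simp
    qed
  next
    show "(\<lambda>r. Phi n (1 # 2 # r)) ` ?C = PS m n"
    proof (intro set_eqI iffI)
      fix \<pi> assume "\<pi> \<in> (\<lambda>r. Phi n (1 # 2 # r)) ` ?C"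
      then obtain r where r: "r \<in> ?C" "\<pi> = Phi n (1 # 2 # r)" by blast
      have o: "okI (m+1) (m+2) (n+1) (1 # 2 # r)" using r unfolding C_def by simp
      show "\<pi> \<in> PS m n" using Phi_PS[OF m1 o] r by simp
    next
      fix \<pi> assume h: "\<pi> \<in> PS m n"
      have "\<exists>L. okI (m+1) (m+2) (n+1) L \<and> L!0 = 1 \<and> L!1 = 2 \<and> 2 \<le> length L \<and> Phi n L = \<pi>"
        using l_ok[OF m1 h] l0[OF m1 h] l1[OF m1 h] llen[OF m1 h] l_Phi[OF m1 h] by blast
      then obtain L where L: "okI (m+1) (m+2) (n+1) L" "L!0 = 1" "L!1 = 2" "2 \<le> length L" "Phi n L = \<pi>"
        by blast
      have "L = 1 # 2 # drop 2 L"
      proof (cases L)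
        case Nil then show ?thesis using L by simp
      next
        case (Cons a L')
        then show ?thesis using L by (cases L') auto
      qed
      then have "drop 2 L \<in> ?C" "\<pi> = Phi n (1 # 2 # drop 2 L)" using L unfolding C_def by auto
      then show "\<pi> \<in> (\<lambda>r. Phi n (1 # 2 # r)) ` ?C" by blast
    qed
  qed
  show ?thesis using P CG bij_betw_same_card[OF bij] by simp
qed



theorem mainTheorem10:
  fixes m n :: nat
  assumes "m \<ge> 1"
  shows "(sseq (m+1) (m+2) (int n))^2 =
    (if n = 0 then 1 else 0)
    + (sseq (m+1) (m+2) (int n - int m - 1))^2
    + (sseq (m+1) (m+2) (int n - int m - 2))^2
    + 2 * (\<Sum>l = 2*m+3..n. Pperm {-2, int m - 1, int m} (l - (2*m+3))
                             * (sseq (m+1) (m+2) (int n - int l))^2)"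
proof -
  let ?S = "\<lambda>k. sseq (m+1) (m+2) k"
  have m1: "1 \<le> m" using assms .
  have r: "?S (int n) = (if n = 0 then 1 else 0) + ?S (int n - int m - 1) + ?S (int n - int m - 2)"
    using sseq_rec[of "int n" "m+1" "m+2"] by (simp add: algebra_simps)
  have z: "n = 0 \<Longrightarrow> ?S (int n - int m - 1) = 0 \<and> ?S (int n - int m - 2) = 0"
    by (simp add: sseq_neg)
  have sq: "(?S (int n))^2 = (if n = 0 then 1 else 0) + (?S (int n - int m - 1))^2
      + (?S (int n - int m - 2))^2 + 2 * (?S (int n - int m - 1) * ?S (int n - int m - 2))"
    unfolding r using z by (cases "n = 0") (simp_all add: power2_eq_square algebra_simps)
  have a: "?S (int n - int m - 1) * ?S (int n - int m - 2) =
     (\<Sum>T\<le>n. G (m+1) (m+2) (m+1) (m+2) T * (?S (int n - int T - int (m+2)))^2)"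
  proof -
    have "?S (int n - int (m+1)) * ?S (int n - int (m+1+1)) =
      (if m + 1 + 1 = m + 1 + (m + 1) then (?S (int n - int (m + 1 + 1)))^2 else 0)
      + (\<Sum>T\<le>n. G (m+1) (m+1+1) (m+1) (m+1+1) T * (?S (int n - int T - int (m+1+1)))^2)"
      using alg[of "m+1" "m+1" "m+1+1" n] by simp
    then show ?thesis using m1 by (simp add: algebra_simps)
  qed
  have Gv: "G (m+1) (m+2) (m+1) (m+2) T = (if m + 1 \<le> T then Pperm {-2, int m - 1, int m} (T - (m+1)) else 0)" for T
  proof (cases "m + 1 \<le> T")
    case True
    have "G (m+1) (m+2) (1 + m) (2 + m) ((T - m) + m) = G (m+1) (m+2) 1 2 (T - m)"
      by (rule G_shift)
    moreover have "T - m = (T - (m+1)) + 1" using True by simp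
    ultimately show ?thesis using True Pperm_G[OF m1, of "T - (m+1)"] by (simp add: add.commute)
  next
    case False
    then show ?thesis by (simp add: G_zero)
  qed
  define f where "f = (\<lambda>l. Pperm {-2, int m - 1, int m} (l - (2*m+3)) * (?S (int n - int l))^2)"
  have b: "(\<Sum>T\<le>n. G (m+1) (m+2) (m+1) (m+2) T * (?S (int n - int T - int (m+2)))^2)
      = (\<Sum>l = 2*m+3..n. f l)"
  proof (cases "m + 2 \<le> n")
    case True
    have "(\<Sum>T\<le>n. G (m+1) (m+2) (m+1) (m+2) T * (?S (int n - int T - int (m+2)))^2)
        = (\<Sum>T\<in>{m+1..n-(m+2)}. G (m+1) (m+2) (m+1) (m+2) T * (?S (int n - int T - int (m+2)))^2)"
    proof (rule sum.mono_neutral_right)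
      show "finite {..n}" by simp
      show "{m+1..n-(m+2)} \<subseteq> {..n}" by auto
      show "\<forall>T\<in>{..n} - {m+1..n-(m+2)}. G (m+1) (m+2) (m+1) (m+2) T * (?S (int n - int T - int (m+2)))^2 = 0"
      proof
        fix T assume "T \<in> {..n} - {m+1..n-(m+2)}"
        then have "T < m + 1 \<or> n < T + (m+2)" by auto
        then show "G (m+1) (m+2) (m+1) (m+2) T * (?S (int n - int T - int (m+2)))^2 = 0"
          by (auto simp: G_zero sseq_neg)
      qed
    qed
    also have "\<dots> = (\<Sum>T\<in>{m+1..n-(m+2)}. f (T + (m+2)))"
    proof (rule sum.cong[OF refl])
      fix T assume T: "T \<in> {m+1..n-(m+2)}"
      have g: "G (m+1) (m+2) (m+1) (m+2) T = Pperm {-2, int m - 1, int m} (T - (m+1))"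
        using Gv[of T] T by simp
      have e1: "T + (m+2) - (2*m+3) = T - (m+1)" using T by auto
      have e2: "int n - int (T + (m+2)) = int n - int T - int (m+2)" by simp
      show "G (m+1) (m+2) (m+1) (m+2) T * (?S (int n - int T - int (m+2)))^2 = f (T + (m+2))"
        unfolding f_def g e1 e2 ..
    qed
    also have "\<dots> = (\<Sum>l\<in>(\<lambda>T. T + (m+2)) ` {m+1..n-(m+2)}. f l)"
      by (subst sum.reindex) (auto simp: inj_on_def)
    also have "(\<lambda>T. T + (m+2)) ` {m+1..n-(m+2)} = {2*m+3..n}"
    proof -
      have e: "n - (m+2) + (m+2) = n" "m+1+(m+2) = 2*m+3" using True by auto
      have "(\<lambda>T. T + (m+2)) ` {m+1..n-(m+2)} = {m+1+(m+2)..n-(m+2)+(m+2)}"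
        by (rule image_add_atLeastAtMost')
      then show ?thesis unfolding e .
    qed
    finally show ?thesis .
  next
    case False
    have "(\<Sum>T\<le>n. G (m+1) (m+2) (m+1) (m+2) T * (?S (int n - int T - int (m+2)))^2) = 0"
      using False by (intro sum.neutral) (auto simp: sseq_neg)
    moreover have "{2*m+3..n} = {}" using False by auto
    ultimately show ?thesis by simp
  qed
  show ?thesis unfolding sq a b f_def by simp
qed

end
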